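(* Let $k$ be an odd integer with $k\ge 5$, let $D$ be a strong $k$-quasi-transitive digraph with $\mathrm{diam}(D)\ge k+2$, let $u,v\in V(D)$ with $d(u,v)=k+2$, and let $P$ be a shortest $(u,v)$-path. Let $I=\{x\in V(D)\setminus V(P): x\Rightarrow V(P)\}$, $W=\{x\in V(D)\setminus V(P): V(P)\Rightarrow x\}$ and $B=V(D)\setminus(V(P)\cup I\cup W)$. If $D[V(P)]$ is a semicomplete bipartite digraph, then $D[B]$ is either a semicomplete bipartite digraph or an empty digraph.
   Context: All digraphs are finite, without loops or multiple arcs (opposite arcs allowed). Vertices $x,y$ are adjacent if $xy$ or $yx$ is an arc. For vertex sets $X,Y$ (singletons identified with vertices), $X\Rightarrow Y$ means there is no arc from $Y$ to $X$. For $k\ge 2$, $D$ is $k$-quasi-transitive if for every path $x_0x_1\ldots x_k$ of length $k$, $x_0$ and $x_k$ are adjacent. $d(x,y)$ is the length of a shortest $(x,y)$-path, $\mathrm{diam}(D)=\max_{x,y}d(x,y)$. $D[S]$ is the induced subdigraph. A semicomplete bipartite digraph: there is a bipartition $(X,Y)$ of the vertex set with no arcs inside $X$ or $Y$ and every vertex of $X$ adjacent to every vertex of $Y$. An empty digraph is one with no arcs. *)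

theory Defs
  imports Main
begin

text \<open>A finite digraph with vertex set V and arc set A: no loops; multiple arcs
are excluded automatically since A is a set of pairs; opposite arcs allowed.\<close>
definition digraph :: "'a set \<Rightarrow> ('a \<times> 'a) set \<Rightarrow> bool" where
  "digraph V A \<longleftrightarrow> finite V \<and> A \<subseteq> V \<times> V \<and> (\<forall>x. (x, x) \<notin> A)"

definition adjacent :: "('a \<times> 'a) set \<Rightarrow> 'a \<Rightarrow> 'a \<Rightarrow> bool" where
  "adjacent A x y \<longleftrightarrow> (x, y) \<in> A \<or> (y, x) \<in> A"

text \<open>A path is a nonempty list of distinct vertices with consecutive arcs;
its length is the number of arcs, i.e. length ps - 1.\<close>
definition is_path :: "'a set \<Rightarrow> ('a \<times> 'a) set \<Rightarrow> 'a list \<Rightarrow> bool" where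
  "is_path V A ps \<longleftrightarrow> ps \<noteq> [] \<and> distinct ps \<and> set ps \<subseteq> V \<and>
     (\<forall>i. Suc i < length ps \<longrightarrow> (ps ! i, ps ! Suc i) \<in> A)"

definition is_uv_path :: "'a set \<Rightarrow> ('a \<times> 'a) set \<Rightarrow> 'a \<Rightarrow> 'a \<Rightarrow> 'a list \<Rightarrow> bool" where
  "is_uv_path V A u v ps \<longleftrightarrow> is_path V A ps \<and> hd ps = u \<and> last ps = v"

definition k_quasi_transitive :: "nat \<Rightarrow> 'a set \<Rightarrow> ('a \<times> 'a) set \<Rightarrow> bool" where
  "k_quasi_transitive k V A \<longleftrightarrow>
     (\<forall>ps. is_path V A ps \<and> length ps = k + 1 \<longrightarrow> adjacent A (hd ps) (last ps))"

definition strong :: "'a set \<Rightarrow> ('a \<times> 'a) set \<Rightarrow> bool" where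
  "strong V A \<longleftrightarrow> (\<forall>u\<in>V. \<forall>v\<in>V. \<exists>ps. is_uv_path V A u v ps)"

text \<open>Distance: length of a shortest (u,v)-path (meaningful when one exists).\<close>
definition dist :: "'a set \<Rightarrow> ('a \<times> 'a) set \<Rightarrow> 'a \<Rightarrow> 'a \<Rightarrow> nat" where
  "dist V A u v = (LEAST n. \<exists>ps. is_uv_path V A u v ps \<and> length ps = n + 1)"

definition diam :: "'a set \<Rightarrow> ('a \<times> 'a) set \<Rightarrow> nat" where
  "diam V A = Max {dist V A x y | x y. x \<in> V \<and> y \<in> V}"

definition dom_to :: "('a \<times> 'a) set \<Rightarrow> 'a set \<Rightarrow> 'a set \<Rightarrow> bool" where
  "dom_to A X Y \<longleftrightarrow> (\<forall>y\<in>Y. \<forall>x\<in>X. (y, x) \<notin> A)"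

definition semicomplete_bipartite_on :: "('a \<times> 'a) set \<Rightarrow> 'a set \<Rightarrow> bool" where
  "semicomplete_bipartite_on A S \<longleftrightarrow>
     (\<exists>X Y. X \<union> Y = S \<and> X \<inter> Y = {} \<and> X \<noteq> {} \<and> Y \<noteq> {} \<and>
        (\<forall>x\<in>X. \<forall>x'\<in>X. (x, x') \<notin> A) \<and> (\<forall>y\<in>Y. \<forall>y'\<in>Y. (y, y') \<notin> A) \<and>
        (\<forall>x\<in>X. \<forall>y\<in>Y. adjacent A x y))"

definition empty_on :: "('a \<times> 'a) set \<Rightarrow> 'a set \<Rightarrow> bool" where
  "empty_on A S \<longleftrightarrow> (\<forall>x\<in>S. \<forall>y\<in>S. (x, y) \<notin> A)"

end

theory Submission
  imports Defs
begin

lemma is_path_succ: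
  "is_path V A ps \<longleftrightarrow> ps \<noteq> [] \<and> distinct ps \<and> set ps \<subseteq> V \<and> successively (\<lambda>a b. (a,b) \<in> A) ps"
  unfolding is_path_def successively_conv_nth by auto

lemma path_map:
  assumes "xs \<noteq> []" "distinct xs" "inj_on f (set xs)" "f ` set xs \<subseteq> V"
    "successively (\<lambda>a b. (f a, f b) \<in> A) xs"
  shows "is_path V A (map f xs)"
  using assms by (simp add: is_path_succ distinct_map successively_map)

lemma succ_upt:
  assumes "\<And>m. a \<le> m \<Longrightarrow> Suc m < b \<Longrightarrow> R m (Suc m)"
  shows "successively R [a..<b]"
  using assms
proof (induction b)
  case 0 then show ?case by simp
next
  case (Suc b)
  show ?case
  proof (cases "a \<le> b")
    case True
    have "successively R [a..<b]" using Suc by simp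
    moreover have "a < b \<Longrightarrow> R (b - 1) b" using Suc.prems[of "b - 1"] by simp
    ultimately show ?thesis using True
      by (cases "a = b") (auto simp add: successively_append_iff last_upt)
  next
    case False then show ?thesis by simp
  qed
qed

lemma adjacent_sym: "adjacent A x y \<longleftrightarrow> adjacent A y x"
  unfolding adjacent_def by auto

lemma adjacent_conv: "adjacent (A\<inverse>) x y \<longleftrightarrow> adjacent A x y"
  unfolding adjacent_def by auto

lemma is_path_conv: "is_path V (A\<inverse>) ps \<longleftrightarrow> is_path V A (rev ps)"
  unfolding is_path_succ by auto

locale qt =
  fixes V :: "'a set" and A :: "('a \<times> 'a) set" and p :: "nat \<Rightarrow> 'a" and n :: nat
  assumes n7: "7 \<le> n" and nodd: "odd n"
  and pV: "\<And>m. m \<le> n \<Longrightarrow> p m \<in> V"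
  and pinj: "inj_on p {..n}"
  and noloop: "\<And>x. (x, x) \<notin> A"
  and step: "\<And>m. m < n \<Longrightarrow> (p m, p (Suc m)) \<in> A"
  and chord: "\<And>a b. a + 3 \<le> b \<Longrightarrow> b \<le> n \<Longrightarrow> odd (b - a) \<Longrightarrow> (p b, p a) \<in> A"
  and samepar: "\<And>a b. a \<le> n \<Longrightarrow> b \<le> n \<Longrightarrow> even a = even b \<Longrightarrow> (p a, p b) \<notin> A"
  and F5: "\<And>z i j. z \<in> V \<Longrightarrow> z \<notin> p ` {..n} \<Longrightarrow> i \<le> n \<Longrightarrow> j \<le> n \<Longrightarrow>
              (p i, z) \<in> A \<Longrightarrow> (z, p j) \<in> A \<Longrightarrow> j \<le> i + 2"
  and kqt: "\<And>ps. is_path V A ps \<Longrightarrow> length ps = n - 1 \<Longrightarrow> adjacent A (hd ps) (last ps)"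
begin

definition ext :: "'a \<Rightarrow> 'a \<Rightarrow> nat \<Rightarrow> 'a" where
  "ext x y m = (if m = Suc n then x else if m = Suc (Suc n) then y else p m)"

lemma ext_p[simp]: "m \<le> n \<Longrightarrow> ext x y m = p m"
  unfolding ext_def by auto
lemma ext_x[simp]: "ext x y (Suc n) = x"
  unfolding ext_def by auto
lemma ext_y[simp]: "ext x y (Suc (Suc n)) = y"
  unfolding ext_def by auto

lemma succ_run: "c \<le> Suc n \<Longrightarrow> successively (\<lambda>a b. (ext x y a, ext x y b) \<in> A) [a..<c]"
  by (rule succ_upt) (simp add: step)

lemma samepar': "a \<le> n \<Longrightarrow> b \<le> n \<Longrightarrow> even a = even b \<Longrightarrow> \<not> adjacent A (p a) (p b)"
  unfolding adjacent_def using samepar by metis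

lemma kqt1:
  assumes "z \<in> V" "z \<notin> p ` {..n}" "set xs \<subseteq> {..Suc n}" "distinct xs"
    "successively (\<lambda>a b. (ext z z a, ext z z b) \<in> A) xs" "length xs = n - 1"
  shows "adjacent A (ext z z (hd xs)) (ext z z (last xs))"
proof -
  have inj: "inj_on (ext z z) {..Suc n}"
    using pinj assms(2) unfolding inj_on_def ext_def
    by (auto simp: le_Suc_eq)
  have "xs \<noteq> []" using assms(6) n7 by auto
  have "ext z z ` {..Suc n} \<subseteq> V" using pV assms(1) unfolding ext_def by (auto simp: le_Suc_eq)
  then have "is_path V A (map (ext z z) xs)"
    using assms \<open>xs \<noteq> []\<close> by (intro path_map) (auto intro: inj_on_subset[OF inj])
  from kqt[OF this] assms(6) \<open>xs \<noteq> []\<close> show ?thesis by (simp add: hd_map last_map)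
qed

lemma run2z:
  assumes "z \<in> V" "z \<notin> p ` {..n}" "(z, p a) \<in> A" "a < b" "b \<le> Suc n" "c < d" "d \<le> a"
    "(p (b - 1), p c) \<in> A" "1 + (b - a) + (d - c) = n - 1"
  shows "adjacent A z (p (d - 1))"
proof -
  let ?xs = "Suc n # [a..<b] @ [c..<d]"
  have "adjacent A (ext z z (hd ?xs)) (ext z z (last ?xs))"
  proof (rule kqt1[OF assms(1,2)])
    show "set ?xs \<subseteq> {..Suc n}" using assms by auto
    show "distinct ?xs" using assms by auto
    show "length ?xs = n - 1" using assms by simp
    show "successively (\<lambda>x y. (ext z z x, ext z z y) \<in> A) ?xs"
      using assms succ_run[of b z z a] succ_run[of d z z c]
      by (auto simp: successively_Cons successively_append_iff hd_append last_upt)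
  qed
  then show ?thesis using assms by (simp add: last_upt)
qed

lemma run1z:
  assumes "z \<in> V" "z \<notin> p ` {..n}" "(z, p a) \<in> A" "a < b" "b \<le> Suc n" "1 + (b - a) = n - 1"
  shows "adjacent A z (p (b - 1))"
proof -
  let ?xs = "Suc n # [a..<b]"
  have "adjacent A (ext z z (hd ?xs)) (ext z z (last ?xs))"
  proof (rule kqt1[OF assms(1,2)])
    show "set ?xs \<subseteq> {..Suc n}" using assms by auto
    show "distinct ?xs" using assms by auto
    show "length ?xs = n - 1" using assms by simp
    show "successively (\<lambda>x y. (ext z z x, ext z z y) \<in> A) ?xs"
      using assms succ_run[of b z z a]
      by (auto simp: successively_Cons)
  qed
  then show ?thesis using assms by (simp add: last_upt)
qed

lemma D2:
  assumes "z \<in> V" "z \<notin> p ` {..n}" "(z, p j) \<in> A" "2 \<le> j" "j \<le> n"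
  shows "adjacent A z (p (j - 2))"
proof (cases "4 \<le> j")
  case True
  have "(p n, p 2) \<in> A" using chord[of 2 n] n7 nodd by simp
  then have "adjacent A z (p (j - 1 - 1))"
    by (intro run2z[OF assms(1,2,3), of "Suc n" 2 "j - 1"]) (use True assms n7 in simp_all)
  moreover have "j - 1 - 1 = j - 2" by simp
  ultimately show ?thesis by simp
next
  case False
  have "(p (n - 2), p 0) \<in> A" using chord[of 0 "n - 2"] n7 nodd by simp
  moreover have "n - 1 - 1 = n - 2" by simp
  ultimately have "adjacent A z (p (j - 1 - 1))"
    by (intro run2z[OF assms(1,2,3), of "n - 1" 0 "j - 1"]) (use False assms n7 in simp_all)
  moreover have "j - 1 - 1 = j - 2" by simp
  ultimately show ?thesis by simp
qed

lemma D4: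
  assumes "z \<in> V" "z \<notin> p ` {..n}" "(z, p j) \<in> A" "4 \<le> j" "j \<le> n"
  shows "adjacent A z (p (j - 4))"
proof -
  have "(p n, p 0) \<in> A" using chord[of 0 n] n7 nodd by simp
  then have "adjacent A z (p (j - 3 - 1))"
    by (intro run2z[OF assms(1,2,3), of "Suc n" 0 "j - 3"]) (use assms n7 in simp_all)
  moreover have "j - 3 - 1 = j - 4" by simp
  ultimately show ?thesis by simp
qed

lemma T1:
  assumes "z \<in> V" "z \<notin> p ` {..n}" "(z, p j) \<in> A" "j \<le> 3"
  shows "adjacent A z (p (j + n - 3))"
  using run1z[OF assms(1,2,3), of "j + n - 2"] assms n7 by simp

lemma Down:
  assumes "z \<in> V" "z \<notin> p ` {..n}"
  shows "(z, p j) \<in> A \<Longrightarrow> j \<le> n \<Longrightarrow> m \<le> j \<Longrightarrow> even m = even j \<Longrightarrow> adjacent A z (p m)"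
proof (induction j rule: less_induct)
  case (less j)
  show ?case
  proof (cases "m = j")
    case True then show ?thesis using less.prems unfolding adjacent_def by simp
  next
    case False
    then have mj: "m + 2 \<le> j" using less.prems by presburger
    have a2: "adjacent A z (p (j - 2))" using D2[OF assms less.prems(1)] mj less.prems by simp
    show ?thesis
    proof (cases "(z, p (j - 2)) \<in> A")
      case True
      then show ?thesis using less.IH[of "j - 2"] less.prems mj by simp
    next
      case False
      then have in2: "(p (j - 2), z) \<in> A" using a2 unfolding adjacent_def by simp
      show ?thesis
      proof (cases "m = j - 2")
        case True then show ?thesis using a2 by simp
      next
        case False
        then have mj4: "m + 4 \<le> j" using mj less.prems by presburger
        have a4: "adjacent A z (p (j - 4))" using D4[OF assms less.prems(1)] mj4 less.prems by simp
        show ?thesis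
        proof (cases "(z, p (j - 4)) \<in> A")
          case True
          then show ?thesis using less.IH[of "j - 4"] less.prems mj4 by simp
        next
          case False
          then have in4: "(p (j - 4), z) \<in> A" using a4 unfolding adjacent_def by simp
          have "j \<le> j - 4 + 2" by (rule F5[OF assms _ _ in4 less.prems(1)]) (use less.prems in simp_all)
          then show ?thesis using mj4 by simp
        qed
      qed
    qed
  qed
qed

lemma img_conv: "(\<lambda>m. p (n - m)) ` {..n} = p ` {..n}"
proof
  show "(\<lambda>m. p (n - m)) ` {..n} \<subseteq> p ` {..n}" by auto
  show "p ` {..n} \<subseteq> (\<lambda>m. p (n - m)) ` {..n}"
  proof
    fix x assume "x \<in> p ` {..n}"
    then obtain m where "m \<le> n" "x = p m" by auto
    then have "x = p (n - (n - m))" by simp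
    then show "x \<in> (\<lambda>m. p (n - m)) ` {..n}" by (metis atMost_iff diff_le_self image_eqI)
  qed
qed

lemma conv: "qt V (A\<inverse>) (\<lambda>m. p (n - m)) n"
proof
  show "7 \<le> n" by (rule n7)
  show "odd n" by (rule nodd)
  show "\<And>m. m \<le> n \<Longrightarrow> p (n - m) \<in> V" using pV by simp
  show "inj_on (\<lambda>m. p (n - m)) {..n}"
    using pinj unfolding inj_on_def by (metis atMost_iff diff_diff_cancel diff_le_self)
  show "\<And>x. (x, x) \<notin> A\<inverse>" using noloop by simp
  show "\<And>m. m < n \<Longrightarrow> (p (n - m), p (n - Suc m)) \<in> A\<inverse>"
  proof -
    fix m assume "m < n"
    then have "Suc (n - Suc m) = n - m" by simp
    with step[of "n - Suc m"] \<open>m < n\<close> show "(p (n - m), p (n - Suc m)) \<in> A\<inverse>" by simp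
  qed
  show "\<And>a b. a + 3 \<le> b \<Longrightarrow> b \<le> n \<Longrightarrow> odd (b - a) \<Longrightarrow> (p (n - b), p (n - a)) \<in> A\<inverse>"
  proof -
    fix a b assume h: "a + 3 \<le> b" "b \<le> n" "odd (b - a)"
    have "n - a - (n - b) = b - a" using h by simp
    then show "(p (n - b), p (n - a)) \<in> A\<inverse>" using chord[of "n - b" "n - a"] h by simp
  qed
  show "\<And>a b. a \<le> n \<Longrightarrow> b \<le> n \<Longrightarrow> even a = even b \<Longrightarrow> (p (n - a), p (n - b)) \<notin> A\<inverse>"
  proof -
    fix a b assume h: "a \<le> n" "b \<le> n" "even a = even b"
    have "even (n - a) = even (n - b)" using h by (simp add: even_diff_nat)
    then show "(p (n - a), p (n - b)) \<notin> A\<inverse>" using samepar[of "n - b" "n - a"] by simp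
  qed
  show "\<And>z i j. z \<in> V \<Longrightarrow> z \<notin> (\<lambda>m. p (n - m)) ` {..n} \<Longrightarrow> i \<le> n \<Longrightarrow> j \<le> n \<Longrightarrow>
          (p (n - i), z) \<in> A\<inverse> \<Longrightarrow> (z, p (n - j)) \<in> A\<inverse> \<Longrightarrow> j \<le> i + 2"
  proof -
    fix z i j assume h: "z \<in> V" "z \<notin> (\<lambda>m. p (n - m)) ` {..n}" "i \<le> n" "j \<le> n"
      "(p (n - i), z) \<in> A\<inverse>" "(z, p (n - j)) \<in> A\<inverse>"
    have "n - i \<le> n - j + 2" using F5[of z "n - j" "n - i"] h img_conv by simp
    then show "j \<le> i + 2" using h by simp
  qed
  show "\<And>ps. is_path V (A\<inverse>) ps \<Longrightarrow> length ps = n - 1 \<Longrightarrow> adjacent (A\<inverse>) (hd ps) (last ps)"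
  proof -
    fix ps assume h: "is_path V (A\<inverse>) ps" "length ps = n - 1"
    then have "is_path V A (rev ps)" "ps \<noteq> []" using is_path_conv[of V A ps] unfolding is_path_def by auto
    then have "adjacent A (hd (rev ps)) (last (rev ps))" using kqt h by simp
    then show "adjacent (A\<inverse>) (hd ps) (last ps)" using \<open>ps \<noteq> []\<close>
      by (simp add: hd_rev last_rev adjacent_conv adjacent_sym)
  qed
qed

lemma Up:
  assumes "z \<in> V" "z \<notin> p ` {..n}" "(p i, z) \<in> A" "i \<le> m" "m \<le> n" "even m = even i"
  shows "adjacent A z (p m)"
proof -
  have "adjacent (A\<inverse>) z (p (n - (n - m)))"
    by (rule qt.Down[OF conv, of z "n - i" "n - m"])
       (use assms img_conv in \<open>simp_all add: even_diff_nat\<close>)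
  then show ?thesis using assms by (simp add: adjacent_conv)
qed

lemma T2:
  assumes "z \<in> V" "z \<notin> p ` {..n}" "(p i, z) \<in> A" "n - 3 \<le> i" "i \<le> n"
  shows "adjacent A z (p (i + 3 - n))"
proof -
  have "adjacent (A\<inverse>) z (p (n - (n - i + n - 3)))"
    by (rule qt.T1[OF conv, of z "n - i"]) (use assms img_conv in simp_all)
  moreover have "n - (n - i + n - 3) = i + 3 - n" using assms n7 by simp
  ultimately show ?thesis by (simp add: adjacent_conv)
qed

lemma core:
  assumes z: "z \<in> V" "z \<notin> p ` {..n}" and iz: "(p i, z) \<in> A" and zj: "(z, p j) \<in> A"
    and j3: "j \<le> 3" and "n - 3 \<le> i" "i \<le> n" and par: "even i \<noteq> even j"
  shows False
proof -
  have sp: "\<not> adjacent A (p a) (p b)" if "a \<le> n" "b \<le> n" "even a = even b" for a b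
    using samepar' that by blast
  consider "j + n - 2 \<le> i" | "j = 1 \<or> j = 3" "i = n - 3" | "j = 2" "i = n - 2" | "j = 3" "i = n - 1"
  proof -
    have hi: "i = n-3 \<or> i = n-2 \<or> i = n-1 \<or> i = n" using assms by linarith
    have hj: "j = 0 \<or> j = 1 \<or> j = 2 \<or> j = 3" using j3 by linarith
    have e: "even (n-3)" "odd (n-2)" "even (n-1)" using nodd n7 by (simp_all add: even_diff_nat)
    show thesis using hi hj e par that nodd n7 by auto
  qed
  then show False
  proof cases
    case 1
    let ?xs = "[i, Suc n] @ [j..<j+n-3]"
    have "adjacent A (ext z z (hd ?xs)) (ext z z (last ?xs))"
    proof (rule kqt1[OF z])
      show "set ?xs \<subseteq> {..Suc n}" using assms 1 by auto
      show "distinct ?xs" using assms 1 n7 by auto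
      show "length ?xs = n - 1" using n7 by simp
      show "successively (\<lambda>x y. (ext z z x, ext z z y) \<in> A) ?xs"
        using assms 1 n7 succ_run[of "j+n-3" z z j]
        by (auto simp: successively_Cons)
    qed
    moreover have "last ?xs = j + n - 4" using n7 by (simp add: last_upt)
    ultimately have "adjacent A (p i) (p (j + n - 4))" using assms 1 n7 by simp
    moreover have "even i = even (j + n - 4)" using par nodd n7 by (simp add: even_diff_nat)
    ultimately show False using sp[of i "j + n - 4"] assms 1 n7 by simp
  next
    case 2
    let ?xs = "[n-2, n-1, n, n-3, Suc n] @ [j..<j+n-6]"
    have a1: "(p (n-2), p (n-1)) \<in> A" using step[of "n-2"] n7 by (simp add: Suc_diff_Suc numeral_eq_Suc)
    have a2: "(p (n-1), p n) \<in> A" using step[of "n-1"] n7 by simp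
    have a3: "(p n, p (n-3)) \<in> A" using chord[of "n-3" n] n7 by simp
    have "adjacent A (ext z z (hd ?xs)) (ext z z (last ?xs))"
    proof (rule kqt1[OF z])
      show "set ?xs \<subseteq> {..Suc n}" using assms 2 by auto
      show "distinct ?xs" using assms 2 n7 by auto
      show "length ?xs = n - 1" using n7 by simp
      show "successively (\<lambda>x y. (ext z z x, ext z z y) \<in> A) ?xs"
        using assms 2 n7 succ_run[of "j+n-6" z z j] a1 a2 a3
        by (auto simp: successively_Cons)
    qed
    moreover have "last ?xs = j + n - 7" using n7 by (simp add: last_upt)
    ultimately have "adjacent A (p (n-2)) (p (j + n - 7))" using assms 2 n7 by simp
    moreover have "even (n - 2) = even (j + n - 7)" using 2 nodd n7 by (auto simp add: even_diff_nat)
    moreover have "j + n - 7 \<le> n" using j3 by linarith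
    ultimately show False using sp[of "n-2" "j + n - 7"] by simp
  next
    case 3
    let ?xs = "[4..<n-1] @ [Suc n, 2, 3, 0]"
    have a1: "(p 2, p 3) \<in> A" using step[of 2] n7 by (simp add: numeral_eq_Suc)
    have a3: "(p 3, p 0) \<in> A" using chord[of 0 3] n7 by simp
    have iz2: "(p (n - Suc (Suc 0)), z) \<in> A" using iz 3 by (simp add: numeral_2_eq_2)
    have "adjacent A (ext z z (hd ?xs)) (ext z z (last ?xs))"
    proof (rule kqt1[OF z])
      show "set ?xs \<subseteq> {..Suc n}" using assms 3 by auto
      show "distinct ?xs" using assms 3 n7 by auto
      show "length ?xs = n - 1" using n7 by simp
      show "successively (\<lambda>x y. (ext z z x, ext z z y) \<in> A) ?xs"
        using assms 3 n7 succ_run[of "n-1" z z 4] a1 a3 iz2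
        by (auto simp: successively_append_iff last_upt)
    qed
    then have "adjacent A (p 4) (p 0)" using n7 by simp
    then show False using sp[of 4 0] n7 by simp
  next
    case 4
    let ?xs = "[6..<n] @ [Suc n, 3, 0, 1, 2]"
    have a1: "(p 0, p 1) \<in> A" "(p 1, p 2) \<in> A" using step[of 0] step[of 1] n7 by (simp_all add: numeral_eq_Suc)
    have a3: "(p 3, p 0) \<in> A" using chord[of 0 3] n7 by simp
    have "adjacent A (ext z z (hd ?xs)) (ext z z (last ?xs))"
    proof (rule kqt1[OF z])
      show "set ?xs \<subseteq> {..Suc n}" using assms 4 n7 by auto
      show "distinct ?xs" using assms 4 n7 by auto
      show "length ?xs = n - 1" using n7 by simp
      show "successively (\<lambda>x y. (ext z z x, ext z z y) \<in> A) ?xs"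
        using assms 4 n7 succ_run[of n z z 6] a1 a3
        by (auto simp: successively_append_iff last_upt)
    qed
    then have "adjacent A (p 6) (p 2)" using n7 by simp
    then show False using sp[of 6 2] n7 by simp
  qed
qed

lemma claim1:
  assumes z: "z \<in> V" "z \<notin> p ` {..n}" and "i \<le> n" "j \<le> n"
    and iz: "(p i, z) \<in> A" and zj: "(z, p j) \<in> A"
  shows "even i = even j"
proof (rule ccontr)
  assume par: "even i \<noteq> even j"
  define lj where "lj = (if even j then 0 else (1::nat))"
  define hi where "hi = (if even i then n - 1 else n)"
  have lj: "lj \<le> j" "lj \<le> 1" "even lj = even j" unfolding lj_def using par by (auto, presburger)
  have hi: "i \<le> hi" "hi \<le> n" "n - 1 \<le> hi" "even hi = even i"
    unfolding hi_def using assms nodd by (auto simp: even_diff_nat, presburger)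
  have al: "adjacent A z (p lj)" using Down[OF z zj] lj assms by simp
  have ah: "adjacent A z (p hi)" using Up[OF z iz] hi by simp
  show False
  proof (cases "(p hi, z) \<in> A")
    case True
    show False
    proof (cases "(z, p lj) \<in> A")
      case True
      show False by (rule core[OF z \<open>(p hi, z) \<in> A\<close> True]) (use lj hi par in auto)
    next
      case False
      then have "(p lj, z) \<in> A" using al unfolding adjacent_def by auto
      then have "j \<le> lj + 2" using F5[OF z _ _ _ zj] lj assms by simp
      then show False by (intro core[OF z \<open>(p hi, z) \<in> A\<close> zj]) (use lj hi par in auto)
    qed
  next
    case False
    then have zh: "(z, p hi) \<in> A" using ah unfolding adjacent_def by auto
    then have "hi \<le> i + 2" using F5[OF z _ _ iz zh] hi assms by simp
    then have i3: "n - 3 \<le> i" using hi by linarith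
    show False
    proof (cases "(z, p lj) \<in> A")
      case True
      show False by (rule core[OF z iz True]) (use lj i3 assms par in auto)
    next
      case False
      then have "(p lj, z) \<in> A" using al unfolding adjacent_def by auto
      then have "j \<le> lj + 2" using F5[OF z _ _ _ zj] lj assms by simp
      then show False by (intro core[OF z iz zj]) (use lj i3 assms par in auto)
    qed
  qed
qed

definition inB :: "'a \<Rightarrow> bool" where
  "inB z \<longleftrightarrow> z \<in> V \<and> z \<notin> p ` {..n} \<and> (\<exists>i\<le>n. (p i, z) \<in> A) \<and> (\<exists>j\<le>n. (z, p j) \<in> A)"

lemma ex_rev: "(\<exists>i\<le>n. P (n - i)) \<longleftrightarrow> (\<exists>j\<le>n. P (j::nat))"
proof
  assume "\<exists>j\<le>n. P j"
  then obtain j where "j \<le> n" "P j" by auto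
  then have "n - j \<le> n" "P (n - (n - j))" by simp_all
  then show "\<exists>i\<le>n. P (n - i)" by blast
next
  assume "\<exists>i\<le>n. P (n - i)"
  then obtain i where "i \<le> n" "P (n - i)" by auto
  then show "\<exists>j\<le>n. P j" using diff_le_self by blast
qed

lemma inB_conv: "qt.inB V (A\<inverse>) (\<lambda>m. p (n - m)) n z \<longleftrightarrow> inB z"
proof -
  have "(\<exists>i\<le>n. (p (n - i), z) \<in> A\<inverse>) \<longleftrightarrow> (\<exists>j\<le>n. (z, p j) \<in> A)"
    using ex_rev[of "\<lambda>j. (z, p j) \<in> A"] by simp
  moreover have "(\<exists>i\<le>n. (z, p (n - i)) \<in> A\<inverse>) \<longleftrightarrow> (\<exists>j\<le>n. (p j, z) \<in> A)"
    using ex_rev[of "\<lambda>j. (p j, z) \<in> A"] by simp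
  ultimately show ?thesis
    unfolding qt.inB_def[OF conv] inB_def img_conv by blast
qed

lemma LowAdj:
  assumes B: "inB z" and zj: "(z, p j) \<in> A" "j \<le> n"
  shows "adjacent A z (p (j mod 2)) \<and> adjacent A z (p (j mod 2 + 2))"
proof -
  have z: "z \<in> V" "z \<notin> p ` {..n}" using B unfolding inB_def by auto
  obtain i where iz: "i \<le> n" "(p i, z) \<in> A" using B unfolding inB_def by auto
  have pij: "even i = even j" using claim1[OF z iz(1) zj(2) iz(2) zj(1)] .
  define l where "l = j mod 2"
  have l: "l \<le> j" "even l = even j" "l \<le> 1" unfolding l_def by simp_all
  have a1: "adjacent A z (p l)" using Down[OF z zj(1) zj(2) l(1)] l by simp
  have a2: "adjacent A z (p (l + 2))"
  proof (cases "l + 2 \<le> j")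
    case True then show ?thesis using Down[OF z zj(1) zj(2) True] l by simp
  next
    case False
    show ?thesis
    proof (cases "i \<le> l + 2")
      case True then show ?thesis using Up[OF z iz(2) True] l pij n7 by simp
    next
      case False
      define h where "h = l + n - 1"
      have h: "even h = even i" "h \<le> n" "l + 2 \<le> h" "n - 1 \<le> h"
        unfolding h_def using l pij nodd n7 by (auto simp: even_diff_nat)
      have "i \<le> h"
      proof (rule ccontr)
        assume "\<not> i \<le> h"
        then have "i = n" "h = n - 1" using h iz by auto
        then show False using h nodd n7 by (simp add: even_diff_nat)
      qed
      then have ah: "adjacent A z (p h)" using Up[OF z iz(2)] h by simp
      show ?thesis
      proof (cases "(z, p h) \<in> A")
        case True then show ?thesis using Down[OF z True h(2) h(3)] h l pij by simp
      next
        case False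
        then have "(p h, z) \<in> A" using ah unfolding adjacent_def by auto
        from T2[OF z this] h have "adjacent A z (p (h + 3 - n))" by simp
        moreover have "h + 3 - n = l + 2" unfolding h_def using n7 by simp
        ultimately show ?thesis by simp
      qed
    qed
  qed
  show ?thesis using a1 a2 unfolding l_def by simp
qed

lemma HighAdj:
  assumes B: "inB z" and iz: "(p i, z) \<in> A" "i \<le> n"
  shows "adjacent A z (p (n - (n - i) mod 2)) \<and> adjacent A z (p (n - ((n - i) mod 2 + 2)))"
proof -
  have "qt.inB V (A\<inverse>) (\<lambda>m. p (n - m)) n z" using B inB_conv by simp
  from qt.LowAdj[OF conv this, of "n - i"] iz
  show ?thesis by (simp add: adjacent_conv)
qed

end

context qt begin
lemma kqt2:
  assumes "x \<in> V" "x \<notin> p ` {..n}" "y \<in> V" "y \<notin> p ` {..n}" "x \<noteq> y"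
    "set xs \<subseteq> {..Suc (Suc n)}" "distinct xs"
    "successively (\<lambda>a b. (ext x y a, ext x y b) \<in> A) xs" "length xs = n - 1"
  shows "adjacent A (ext x y (hd xs)) (ext x y (last xs))"
proof -
  have inj: "inj_on (ext x y) {..Suc (Suc n)}"
    using pinj assms(2,4,5) unfolding inj_on_def ext_def
    by (auto simp: le_Suc_eq)
  have "xs \<noteq> []" using assms(9) n7 by auto
  have "ext x y ` {..Suc (Suc n)} \<subseteq> V" using pV assms(1,3) unfolding ext_def by (auto simp: le_Suc_eq)
  then have "ext x y ` set xs \<subseteq> V" using assms(6) by blast
  then have "is_path V A (map (ext x y) xs)"
    using assms \<open>xs \<noteq> []\<close> by (intro path_map) (auto intro: inj_on_subset[OF inj])
  from kqt[OF this] assms(9) \<open>xs \<noteq> []\<close> show ?thesis by (simp add: hd_map last_map)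
qed

lemma R1path:
  assumes u: "u \<in> V" "u \<notin> p ` {..n}" and w: "w \<in> V" "w \<notin> p ` {..n}" and "u \<noteq> w"
    and m: "1 \<le> m" "m \<le> n" and um: "(u, p m) \<in> A" and mw: "(p (m - 1), w) \<in> A"
  shows "adjacent A u w"
proof -
  obtain s t where st: "s < m" "m \<le> t" "t \<le> n" "t = s + (n - 4)"
  proof (cases "m \<le> 4")
    case True show ?thesis by (rule that[of "m - 1" "m + n - 5"]) (use m n7 True in linarith)+
  next
    case False show ?thesis by (rule that[of 4 n]) (use m n7 False in linarith)+
  qed
  have ch: "(p t, p s) \<in> A" using chord[of s t] st n7 nodd by (simp add: even_diff_nat)
  let ?xs = "Suc n # [m..<Suc t] @ [s..<m] @ [Suc (Suc n)]"
  have "adjacent A (ext u w (hd ?xs)) (ext u w (last ?xs))"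
  proof (rule kqt2[OF u w \<open>u \<noteq> w\<close>])
    show "set ?xs \<subseteq> {..Suc (Suc n)}" using st by auto
    show "distinct ?xs" using st by auto
    show "length ?xs = n - 1" using st n7 by simp
    show "successively (\<lambda>a b. (ext u w a, ext u w b) \<in> A) ?xs"
      using st um mw ch succ_run[of "Suc t" u w m] succ_run[of m u w s]
      by (auto simp del: upt_Suc simp: successively_Cons successively_append_iff last_upt)
  qed
  then show ?thesis by simp
qed

lemma Rnpath:
  assumes u: "u \<in> V" "u \<notin> p ` {..n}" and w: "w \<in> V" "w \<notin> p ` {..n}" and "u \<noteq> w"
    and j: "j \<le> 4" and uj: "(u, p j) \<in> A" and jw: "(p (j + n - 4), w) \<in> A"
  shows "adjacent A u w"
proof -
  let ?xs = "Suc n # [j..<j + n - 3] @ [Suc (Suc n)]"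
  have "adjacent A (ext u w (hd ?xs)) (ext u w (last ?xs))"
  proof (rule kqt2[OF u w \<open>u \<noteq> w\<close>])
    show "set ?xs \<subseteq> {..Suc (Suc n)}" using j n7 by auto
    show "distinct ?xs" using j n7 by auto
    show "length ?xs = n - 1" using n7 by simp
    show "successively (\<lambda>a b. (ext u w a, ext u w b) \<in> A) ?xs"
      using j n7 uj jw succ_run[of "j + n - 3" u w j]
      by (auto simp del: upt_Suc simp: successively_Cons successively_append_iff last_upt)
  qed
  then show ?thesis by simp
qed

definition cls :: "'a \<Rightarrow> bool" where
  "cls z \<longleftrightarrow> (\<exists>i\<le>n. (p i, z) \<in> A \<and> even i)"

lemma cls_adj:
  assumes B: "inB z" and "m \<le> n" "adjacent A z (p m)"
  shows "even m = cls z"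
proof -
  have z: "z \<in> V" "z \<notin> p ` {..n}" using B unfolding inB_def by auto
  obtain j where zj: "j \<le> n" "(z, p j) \<in> A" using B unfolding inB_def by auto
  obtain i0 where iz: "i0 \<le> n" "(p i0, z) \<in> A" using B unfolding inB_def by auto
  have ins: "even i = even j" if "i \<le> n" "(p i, z) \<in> A" for i
    using claim1[OF z that(1) zj(1) that(2) zj(2)] .
  have "cls z = even j" unfolding cls_def using ins iz by blast
  moreover have "even m = even j"
  proof (cases "(p m, z) \<in> A")
    case True then show ?thesis using ins assms by blast
  next
    case False
    then have "(z, p m) \<in> A" using assms unfolding adjacent_def by auto
    then show ?thesis using claim1[OF z iz(1) assms(2) iz(2)] ins[OF iz] by simp
  qed
  ultimately show ?thesis by simp
qed

lemma same_class:
  assumes Bx: "inB x" and By: "inB y" and c: "cls x = cls y" and xy: "(x, y) \<in> A"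
  shows False
proof -
  have x: "x \<in> V" "x \<notin> p ` {..n}" using Bx unfolding inB_def by auto
  have y: "y \<in> V" "y \<notin> p ` {..n}" using By unfolding inB_def by auto
  have "x \<noteq> y" using xy noloop by auto
  obtain i where iz: "i \<le> n" "(p i, x) \<in> A" using Bx unfolding inB_def by auto
  have ci: "even i = cls x" using cls_adj[OF Bx iz(1)] iz unfolding adjacent_def by auto
  obtain a where a: "a \<le> n" "even a \<noteq> even i" "adjacent A (p a) y"
  proof (cases "n - 4 \<le> i")
    case True
    let ?xs = "[i + 4 - n..<Suc i] @ [Suc n, Suc (Suc n)]"
    have "adjacent A (ext x y (hd ?xs)) (ext x y (last ?xs))"
    proof (rule kqt2[OF x y \<open>x \<noteq> y\<close>])
      show "set ?xs \<subseteq> {..Suc (Suc n)}" using iz by auto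
      show "distinct ?xs" using iz n7 by auto
      have e: "Suc i - (i + 4 - n) = n - 3" using True n7 iz by linarith
      show "length ?xs = n - 1" unfolding length_append length_upt e using n7 by simp
      show "successively (\<lambda>a b. (ext x y a, ext x y b) \<in> A) ?xs"
        using iz xy succ_run[of "Suc i" x y "i + 4 - n"] n7 True
        by (auto simp del: upt_Suc simp: successively_Cons successively_append_iff last_upt)
    qed
    moreover have "hd ?xs = i + 4 - n" using True n7 iz by (simp del: upt_Suc add: hd_append)
    ultimately have a1: "adjacent A (p (i + 4 - n)) y" using True n7 iz by simp
    have a2: "even (i + 4 - n) \<noteq> even i"
    proof -
      have "\<not> i + 4 < n" using True by linarith
      then show ?thesis using True n7 nodd iz by (simp add: even_diff_nat)
    qed
    have a3: "i + 4 - n \<le> n" using iz n7 by linarith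
    show ?thesis by (rule that[OF a3 a2 a1])
  next
    case False
    have ch: "(p n, p 0) \<in> A" using chord[of 0 n] n7 nodd by simp
    let ?xs = "[i + 5..<Suc n] @ [0..<Suc i] @ [Suc n, Suc (Suc n)]"
    have "adjacent A (ext x y (hd ?xs)) (ext x y (last ?xs))"
    proof (rule kqt2[OF x y \<open>x \<noteq> y\<close>])
      show "set ?xs \<subseteq> {..Suc (Suc n)}" using iz by auto
      show "distinct ?xs" using iz n7 by auto
      have e: "Suc n - (i + 5) = n - 4 - i" using False n7 iz by linarith
      show "length ?xs = n - 1" unfolding length_append length_upt e using n7 False by simp
      show "successively (\<lambda>a b. (ext x y a, ext x y b) \<in> A) ?xs"
        using iz xy ch succ_run[of "Suc n" x y "i + 5"] succ_run[of "Suc i" x y 0] n7 False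
        by (auto simp del: upt_Suc simp: successively_Cons successively_append_iff last_upt)
    qed
    moreover have "hd ?xs = i + 5"
    proof -
      have "i + 5 < Suc n" using False by linarith
      then show ?thesis by (simp del: upt_Suc add: hd_append)
    qed
    ultimately have "adjacent A (p (i + 5)) y" using False n7 iz by simp
    moreover have "even (i + 5) \<noteq> even i" by simp
    ultimately show ?thesis using that[of "i + 5"] False by simp
  qed
  have "even a = cls y" using cls_adj[OF By a(1)] a(3) by (simp add: adjacent_sym)
  then show False using a(2) ci c by simp
qed

lemma LowAdj2:
  assumes B: "inB w" and zj: "(w, p j) \<in> A" "j \<le> n" and m: "m \<le> 3" "even m = even j"
  shows "adjacent A w (p m)"
proof -
  have L: "adjacent A w (p (j mod 2)) \<and> adjacent A w (p (j mod 2 + 2))"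
    using LowAdj[OF B zj] .
  have e: "j mod 2 = m mod 2" using m(2) by presburger
  have L2: "adjacent A w (p (m mod 2))" "adjacent A w (p (m mod 2 + 2))" using L[unfolded e] by auto
  show ?thesis
  proof (cases "m < 2")
    case True
    then have "m mod 2 = m" by simp
    then show ?thesis using L2(1) by simp
  next
    case False
    then have "m = 2 \<or> m = 3" using m by linarith
    then have "m mod 2 + 2 = m" by auto
    then show ?thesis using L2(2) by simp
  qed
qed

lemma HighAdj2:
  assumes B: "inB w" and iz: "(p i, w) \<in> A" "i \<le> n" and m: "n - 3 \<le> m" "m \<le> n" "even m = even i"
  shows "adjacent A w (p m)"
proof -
  have B': "qt.inB V (A\<inverse>) (\<lambda>m. p (n - m)) n w" using B inB_conv by simp
  have "even (n - m) = even (n - i)" using m iz by (simp add: even_diff_nat)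
  then have "adjacent (A\<inverse>) w (p (n - (n - m)))"
    using qt.LowAdj2[OF conv B', of "n - i" "n - m"] iz m by simp
  then show ?thesis using m by (simp add: adjacent_conv)
qed

lemma adjz:
  assumes B: "inB w" and m: "m \<le> n" "m \<le> 3 \<or> n - 3 \<le> m" and c: "even m = cls w"
  shows "adjacent A w (p m)"
proof -
  obtain j where zj: "j \<le> n" "(w, p j) \<in> A" using B unfolding inB_def by auto
  obtain i where iz: "i \<le> n" "(p i, w) \<in> A" using B unfolding inB_def by auto
  have cj: "even j = cls w" using cls_adj[OF B zj(1)] zj unfolding adjacent_def by auto
  have ci: "even i = cls w" using cls_adj[OF B iz(1)] iz unfolding adjacent_def by auto
  show ?thesis
  proof (cases "m \<le> 3")
    case True then show ?thesis using LowAdj2[OF B zj(2) zj(1) True] c cj by simp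
  next
    case False
    then have "n - 3 \<le> m" using m by auto
    then show ?thesis using HighAdj2[OF B iz(2) iz(1) _ m(1)] c ci by simp
  qed
qed

lemma lowO:
  assumes B: "inB w"
  shows "\<exists>m\<le>3. even m = cls w \<and> (w, p m) \<in> A"
proof -
  have w: "w \<in> V" "w \<notin> p ` {..n}" using B unfolding inB_def by auto
  obtain j where zj: "j \<le> n" "(w, p j) \<in> A" using B unfolding inB_def by auto
  have cj: "even j = cls w" using cls_adj[OF B zj(1)] zj unfolding adjacent_def by auto
  show ?thesis
  proof (cases "j \<le> 3")
    case True then show ?thesis using zj cj by auto
  next
    case False
    have a: "adjacent A w (p (j mod 2))" using LowAdj[OF B zj(2) zj(1)] by simp
    have e: "even (j mod 2) = cls w" using cj by simp
    show ?thesis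
    proof (cases "(w, p (j mod 2)) \<in> A")
      case True then show ?thesis using e by (intro exI[of _ "j mod 2"]) auto
    next
      case False
      then have "(p (j mod 2), w) \<in> A" using a unfolding adjacent_def by auto
      from F5[OF w _ zj(1) this zj(2)] have "j \<le> j mod 2 + 2" using n7 by simp
      then show ?thesis using False \<open>\<not> j \<le> 3\<close> by simp
    qed
  qed
qed

lemma highI:
  assumes B: "inB w"
  shows "\<exists>m. n - 3 \<le> m \<and> m \<le> n \<and> even m = cls w \<and> (p m, w) \<in> A"
proof -
  have w: "w \<in> V" "w \<notin> p ` {..n}" using B unfolding inB_def by auto
  obtain i where iz: "i \<le> n" "(p i, w) \<in> A" using B unfolding inB_def by auto
  have ci: "even i = cls w" using cls_adj[OF B iz(1)] iz unfolding adjacent_def by auto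
  show ?thesis
  proof (cases "n - 3 \<le> i")
    case True then show ?thesis using iz ci by auto
  next
    case False
    define h where "h = (if even i then n - 1 else n)"
    have h: "n - 1 \<le> h" "h \<le> n" "even h = even i"
      unfolding h_def using nodd n7 by (auto simp: even_diff_nat)
    have a: "adjacent A w (p h)" using HighAdj2[OF B iz(2) iz(1)] h by simp
    show ?thesis
    proof (cases "(p h, w) \<in> A")
      case True then show ?thesis using h ci by (intro exI[of _ h]) auto
    next
      case False
      then have "(w, p h) \<in> A" using a unfolding adjacent_def by auto
      from F5[OF w iz(1) h(2) iz(2) this] have "h \<le> i + 2" .
      then show ?thesis using h False \<open>\<not> n - 3 \<le> i\<close> by linarith
    qed
  qed
qed

lemma cross:
  assumes Bx: "inB x" and By: "inB y" and cxy: "cls x \<noteq> cls y"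
  shows "adjacent A x y"
proof (rule ccontr)
  assume na: "\<not> adjacent A x y"
  have x: "x \<in> V" "x \<notin> p ` {..n}" using Bx unfolding inB_def by auto
  have y: "y \<in> V" "y \<notin> p ` {..n}" using By unfolding inB_def by auto
  have xy: "x \<noteq> y" using cxy by auto
  define z where "z m = (if even m = cls x then x else y)" for m :: nat
  have zB: "inB (z m)" for m unfolding z_def using Bx By by simp
  have zc: "cls (z m) = even m" for m unfolding z_def using cxy by auto
  have zV: "z m \<in> V" "z m \<notin> p ` {..n}" for m unfolding z_def using x y by auto
  have zne: "z a \<noteq> z b" if "even a \<noteq> even b" for a b unfolding z_def using that xy by auto
  have zadj: False if "adjacent A (z a) (z b)" "even a \<noteq> even b" for a b
    using that na unfolding z_def by (auto simp: adjacent_sym split: if_splits)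
  define Oa where "Oa m \<longleftrightarrow> (z m, p m) \<in> A" for m
  define Ia where "Ia m \<longleftrightarrow> (p m, z m) \<in> A" for m
  have Adj: "Oa m \<or> Ia m" if "m \<le> n" "m \<le> 3 \<or> n - 3 \<le> m" for m
    using adjz[OF zB that zc[symmetric]] unfolding Oa_def Ia_def adjacent_def by auto
  have R1: False if "1 \<le> m" "m \<le> n" "Oa m" "Ia (m - 1)" for m
  proof -
    have pe: "even m \<noteq> even (m - 1)" using that by simp
    have "adjacent A (z m) (z (m - 1))"
      by (rule R1path[OF zV(1,2) zV(1,2) zne[OF pe] that(1,2) that(3)[unfolded Oa_def] that(4)[unfolded Ia_def]])
    then show False using zadj pe by blast
  qed
  have Rn: False if "j \<le> 4" "Oa j" "Ia (j + n - 4)" for j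
  proof -
    have pe: "even j \<noteq> even (j + n - 4)" using nodd n7 by (simp add: even_diff_nat)
    have "adjacent A (z j) (z (j + n - 4))"
      by (rule Rnpath[OF zV(1,2) zV(1,2) zne[OF pe] that(1) that(2)[unfolded Oa_def] that(3)[unfolded Ia_def]])
    then show False using zadj pe by blast
  qed
  have F5z: "a \<le> b + 2" if "a \<le> n" "b \<le> n" "even a = even b" "Oa a" "Ia b" for a b
  proof -
    have "z a = z b" unfolding z_def using that by simp
    then show ?thesis using F5[OF zV(1,2) that(2,1)] that(4,5) unfolding Oa_def Ia_def by simp
  qed
  have down: "Oa (m - 1)" if "1 \<le> m" "m \<le> 3" "Oa m" for m
  proof -
    have "m - 1 \<le> n" "m - 1 \<le> 3" "m \<le> n" using that n7 by auto
    then have "Oa (m - 1) \<or> Ia (m - 1)" using Adj by blast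
    then show ?thesis using R1[OF that(1) \<open>m \<le> n\<close> that(3)] by blast
  qed
  have downc: "Oa k" if "m \<le> 3" "Oa m" "k \<le> m" for m k
    using that
  proof (induction m)
    case 0 then show ?case by simp
  next
    case (Suc m)
    show ?case
    proof (cases "k = Suc m")
      case True then show ?thesis using Suc by simp
    next
      case False
      have "Oa m" using down[of "Suc m"] Suc.prems by simp
      then show ?thesis using Suc False by simp
    qed
  qed
  have up: "Ia (Suc m)" if "n - 3 \<le> m" "m < n" "Ia m" for m
  proof -
    have "Suc m \<le> n" "n - 3 \<le> Suc m" using that by auto
    then have "Oa (Suc m) \<or> Ia (Suc m)" using Adj by blast
    then show ?thesis using R1[of "Suc m"] that \<open>Suc m \<le> n\<close> by auto
  qed
  have upc: "Ia k" if "n - 3 \<le> m" "Ia m" "m \<le> k" "k \<le> n" for m k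
    using that
  proof (induction k)
    case 0 then show ?case by simp
  next
    case (Suc k)
    show ?case
    proof (cases "m = Suc k")
      case True then show ?thesis using Suc by simp
    next
      case False
      then have "Ia k" using Suc by simp
      then show ?thesis using up[of k] Suc False by simp
    qed
  qed
  obtain mx where mx: "mx \<le> 3" "even mx = cls x" "(x, p mx) \<in> A" using lowO[OF Bx] by auto
  obtain my where my: "my \<le> 3" "even my = cls y" "(y, p my) \<in> A" using lowO[OF By] by auto
  have Omx: "Oa mx" unfolding Oa_def z_def using mx by simp
  have Omy: "Oa my" unfolding Oa_def z_def using my cxy by simp
  have O0: "Oa 0" using downc[OF mx(1) Omx] by simp
  have O1: "Oa 1"
  proof (cases "1 \<le> mx")
    case True then show ?thesis using downc[OF mx(1) Omx] by simp
  next
    case False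
    then have "mx = 0" by simp
    then have "1 \<le> my" using mx(2) my(2) cxy by (cases my) auto
    then show ?thesis using downc[OF my(1) Omy] by simp
  qed
  obtain hx where hx: "n - 3 \<le> hx" "hx \<le> n" "even hx = cls x" "(p hx, x) \<in> A" using highI[OF Bx] by auto
  obtain hy where hy: "n - 3 \<le> hy" "hy \<le> n" "even hy = cls y" "(p hy, y) \<in> A" using highI[OF By] by auto
  have Ihx: "Ia hx" unfolding Ia_def z_def using hx by simp
  have Ihy: "Ia hy" unfolding Ia_def z_def using hy cxy by simp
  have In: "Ia n" using upc[OF hx(1) Ihx hx(2)] by simp
  have In1: "Ia (n - 1)"
  proof (cases "hx \<le> n - 1")
    case True then show ?thesis using upc[OF hx(1) Ihx True] n7 by simp
  next
    case False
    then have "hx = n" using hx by simp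
    then have "hy \<noteq> n" using hx(3) hy(3) cxy by auto
    then have "hy \<le> n - 1" using hy by simp
    then show ?thesis using upc[OF hy(1) Ihy] n7 by simp
  qed
  have e1: "1 + n - 4 = n - 3" and e3: "3 + n - 4 = n - 1" and e0: "0 + n - 4 = n - 4"
    and e2: "2 + n - 4 = n - 2" and e4: "4 + n - 4 = n" using n7 by simp_all
  have On3: "Oa (n - 3)" using Rn[of 1] O1 Adj[of "n - 3"] e1 n7 by auto
  have I3: "Ia 3" using Rn[of 3] In1 Adj[of 3] e3 n7 by auto
  show False
  proof (cases "Oa 2")
    case True
    show False
    proof (cases "n = 7")
      case True then show False using Rn[of 0] O0 I3 by simp
    next
      case False
      then have n9: "9 \<le> n" using n7 nodd by presburger
      have "n - 3 \<le> n - 2" "n - 2 \<le> n" by auto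
      then have "Oa (n - 2) \<or> Ia (n - 2)" using Adj by blast
      then have "Oa (n - 2)" using Rn[of 2] \<open>Oa 2\<close> e2 by auto
      moreover have "even (n - 2) = even (3::nat)" using nodd n7 by (simp add: even_diff_nat)
      ultimately have "n - 2 \<le> 3 + 2" using F5z[of "n - 2" 3] I3 n7 by simp
      then show False using n9 by simp
    qed
  next
    case False
    then have I2: "Ia 2" using Adj[of 2] n7 by auto
    have "even (n - 3) = even (2::nat)" using nodd n7 by (simp add: even_diff_nat)
    then have "n - 3 \<le> 2 + 2" using F5z[of "n - 3" 2] On3 I2 n7 by simp
    then have "n = 7" using n7 by simp
    then show False using Rn[of 4] On3 In by simp
  qed
qed

lemma final: "semicomplete_bipartite_on A {z. inB z} \<or> empty_on A {z. inB z}"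
proof (cases "(\<exists>x. inB x \<and> cls x) \<and> (\<exists>y. inB y \<and> \<not> cls y)")
  case True
  define Xb where "Xb = {z. inB z \<and> cls z}"
  define Yb where "Yb = {z. inB z \<and> \<not> cls z}"
  have h1: "Xb \<union> Yb = {z. inB z}" "Xb \<inter> Yb = {}" "Xb \<noteq> {}" "Yb \<noteq> {}"
    unfolding Xb_def Yb_def using True by auto
  have h2: "\<forall>x\<in>Xb. \<forall>x'\<in>Xb. (x, x') \<notin> A" "\<forall>x\<in>Yb. \<forall>x'\<in>Yb. (x, x') \<notin> A"
    unfolding Xb_def Yb_def using same_class by auto
  have h3: "\<forall>x\<in>Xb. \<forall>y\<in>Yb. adjacent A x y"
    unfolding Xb_def Yb_def using cross by auto
  have "semicomplete_bipartite_on A {z. inB z}"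
    unfolding semicomplete_bipartite_on_def
    by (rule exI[of _ Xb], rule exI[of _ Yb]) (use h1 h2 h3 in simp)
  then show ?thesis by simp
next
  case False
  have "empty_on A {z. inB z}"
    unfolding empty_on_def
  proof (intro ballI)
    fix x y assume "x \<in> {z. inB z}" "y \<in> {z. inB z}"
    then have "inB x" "inB y" by auto
    moreover have "cls x = cls y" using False \<open>inB x\<close> \<open>inB y\<close> by blast
    ultimately show "(x, y) \<notin> A" using same_class by blast
  qed
  then show ?thesis by simp
qed

end

lemma dist_le:
  assumes "is_uv_path V A u v ps"
  shows "dist V A u v \<le> length ps - 1"
proof -
  have "ps \<noteq> []" using assms unfolding is_uv_path_def is_path_def by auto
  then have "length ps = (length ps - 1) + 1" by simp
  then show ?thesis unfolding dist_def using assms by (intro Least_le) blast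
qed

theorem lemma2p14:
  fixes V :: "'a set" and A :: "('a \<times> 'a) set" and k :: nat
    and u v :: 'a and P :: "'a list"
  assumes "digraph V A"
    and "odd k" and "k \<ge> 5"
    and "strong V A" and "k_quasi_transitive k V A"
    and "diam V A \<ge> k + 2"
    and "u \<in> V" and "v \<in> V" and "dist V A u v = k + 2"
    and "is_uv_path V A u v P" and "length P = dist V A u v + 1"
    and "semicomplete_bipartite_on A (set P)"
  shows "let I = {x \<in> V - set P. dom_to A {x} (set P)};
             W = {x \<in> V - set P. dom_to A (set P) {x}};
             B = V - (set P \<union> I \<union> W)
         in semicomplete_bipartite_on A B \<or> empty_on A B"
proof -
  define n where "n = k + 2"
  define p where "p m = P ! m" for m
  have n7: "7 \<le> n" and nodd: "odd n" using assms(2,3) unfolding n_def by auto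
  have lenP: "length P = Suc n" using assms(9,11) unfolding n_def by simp
  have dig: "finite V" "A \<subseteq> V \<times> V" "\<And>x. (x, x) \<notin> A" using assms(1) unfolding digraph_def by auto
  have Ppath: "is_path V A P" "hd P = u" "last P = v" using assms(10) unfolding is_uv_path_def by auto
  have dP: "distinct P" "set P \<subseteq> V" using Ppath unfolding is_path_def by auto
  have pinj: "inj_on p {..n}" unfolding p_def using dP(1) lenP
    by (simp add: inj_on_def nth_eq_iff_index_eq)
  have pV: "p m \<in> V" if "m \<le> n" for m unfolding p_def using dP(2) lenP that by auto
  have step: "(p m, p (Suc m)) \<in> A" if "m < n" for m
    using Ppath(1) lenP that unfolding is_path_def p_def by auto
  have setP: "set P = p ` {..n}" unfolding p_def using lenP
    by (auto simp: set_conv_nth)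
  have Pne: "P \<noteq> []" using lenP by auto
  have pu: "p 0 = u" using Ppath(2) hd_conv_nth[OF Pne] unfolding p_def by simp
  have pv: "p n = v" using Ppath(3) last_conv_nth[OF Pne] lenP unfolding p_def by simp
  have dn: "dist V A u v = n" using assms(9) unfolding n_def by simp
  have short: False if "is_path V A (map f xs)" "f (hd xs) = u" "f (last xs) = v" "length xs \<le> n" "xs \<noteq> []"
    for f :: "nat \<Rightarrow> 'a" and xs
  proof -
    have "is_uv_path V A u v (map f xs)" using that unfolding is_uv_path_def by (simp add: hd_map last_map)
    from dist_le[OF this] have "n \<le> length xs - 1" using dn by simp
    then show False using that(4,5) n7 by (cases xs) auto
  qed
  have runs: "successively (\<lambda>a b. (f a, f b) \<in> A) [a..<c]" if "c \<le> Suc n" "\<And>m. m \<le> n \<Longrightarrow> f m = p m"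
    for f :: "nat \<Rightarrow> 'a" and a c
    by (rule succ_upt) (use that step in auto)
  have nofwd: "(p a, p b) \<notin> A" if "a + 2 \<le> b" "b \<le> n" for a b
  proof
    assume ab: "(p a, p b) \<in> A"
    let ?xs = "[0..<Suc a] @ [b..<Suc n]"
    have "is_path V A (map p ?xs)"
    proof (rule path_map)
      show "?xs \<noteq> []" by simp
      show "distinct ?xs" using that by auto
      show "inj_on p (set ?xs)" by (rule inj_on_subset[OF pinj]) (use that in auto)
      show "p ` set ?xs \<subseteq> V" using that pV by auto
      show "successively (\<lambda>a b. (p a, p b) \<in> A) ?xs"
        using runs[of "Suc a" p 0] runs[of "Suc n" p b] ab that
        by (auto simp del: upt_Suc simp: successively_append_iff last_upt)
    qed
    moreover have "p (hd ?xs) = u" using pu by (simp del: upt_Suc add: hd_append)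
    moreover have "p (last ?xs) = v" using that pv by (simp del: upt_Suc add: last_upt)
    moreover have "length ?xs \<le> n" using that by simp
    ultimately show False using short[of p ?xs] by simp
  qed
  obtain X Y where XY: "X \<union> Y = set P" "X \<inter> Y = {}" "\<forall>x\<in>X. \<forall>x'\<in>X. (x, x') \<notin> A"
    "\<forall>y\<in>Y. \<forall>y'\<in>Y. (y, y') \<notin> A" "\<forall>x\<in>X. \<forall>y\<in>Y. adjacent A x y"
    using assms(12) unfolding semicomplete_bipartite_on_def by blast
  have inXY: "p m \<in> X \<union> Y" if "m \<le> n" for m using XY(1) setP that by auto
  have parX: "m \<le> n \<Longrightarrow> (p m \<in> X) = (even m = (p 0 \<in> X))" for m
  proof (induction m)
    case 0 then show ?case by simp
  next
    case (Suc m)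
    have a: "(p m, p (Suc m)) \<in> A" using step Suc by simp
    have "p m \<in> X \<union> Y" "p (Suc m) \<in> X \<union> Y" using inXY[of m] inXY[of "Suc m"] Suc.prems by simp_all
    then have "(p (Suc m) \<in> X) = (p m \<notin> X)" using a XY(2,3,4) by blast
    then show ?case using Suc by (cases "even m"; cases "p 0 \<in> X") auto
  qed
  have samepar: "(p a, p b) \<notin> A" if "a \<le> n" "b \<le> n" "even a = even b" for a b
  proof -
    have ea: "(p a \<in> X) = (even a = (p 0 \<in> X))" using parX that(1) by blast
    have eb: "(p b \<in> X) = (even b = (p 0 \<in> X))" using parX that(2) by blast
    have e: "(p a \<in> X) = (p b \<in> X)" unfolding ea eb using that(3) by simp
    show ?thesis
    proof (cases "p a \<in> X")
      case True
      then have "p b \<in> X" using e by simp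
      then show ?thesis using True XY(3) by blast
    next
      case False
      then have "p a \<in> Y" "p b \<in> Y" using e inXY[OF that(1)] inXY[OF that(2)] by auto
      then show ?thesis using XY(4) by blast
    qed
  qed
  have chord: "(p b, p a) \<in> A" if "a + 3 \<le> b" "b \<le> n" "odd (b - a)" for a b
  proof -
    have "even a \<noteq> even b" using that by (auto simp: even_diff_nat)
    moreover have ea: "(p a \<in> X) = (even a = (p 0 \<in> X))" using parX[of a] that by simp
    moreover have eb: "(p b \<in> X) = (even b = (p 0 \<in> X))" using parX that(2) by blast
    ultimately have e: "(p a \<in> X) \<noteq> (p b \<in> X)" by blast
    have "adjacent A (p a) (p b)"
    proof (cases "p a \<in> X")
      case True
      then have "p b \<in> Y" using e inXY[OF that(2)] by auto
      then show ?thesis using True XY(5) by blast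
    next
      case False
      then have "p a \<in> Y" "p b \<in> X" using e inXY[of a] that by auto
      then show ?thesis using XY(5) adjacent_sym by metis
    qed
    then show ?thesis using nofwd[of a b] that unfolding adjacent_def by auto
  qed
  have F5: "j \<le> i + 2" if "z \<in> V" "z \<notin> p ` {..n}" "i \<le> n" "j \<le> n" "(p i, z) \<in> A" "(z, p j) \<in> A"
    for z i j
  proof (rule ccontr)
    assume "\<not> j \<le> i + 2"
    define f where "f m = (if m = Suc n then z else p m)" for m
    have fp: "m \<le> n \<Longrightarrow> f m = p m" for m unfolding f_def by simp
    let ?xs = "[0..<Suc i] @ [Suc n] @ [j..<Suc n]"
    have "is_path V A (map f ?xs)"
    proof (rule path_map)
      show "?xs \<noteq> []" by simp
      show "distinct ?xs" using \<open>\<not> j \<le> i + 2\<close> that by auto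
      have "inj_on f ({..n} \<union> {Suc n})" using pinj that(2) unfolding inj_on_def f_def by auto
      then show "inj_on f (set ?xs)" by (rule inj_on_subset) (use that in auto)
      show "f ` set ?xs \<subseteq> V" using that pV unfolding f_def by auto
      show "successively (\<lambda>a b. (f a, f b) \<in> A) ?xs"
        using runs[of "Suc i" f 0] runs[of "Suc n" f j] fp that \<open>\<not> j \<le> i + 2\<close>
        by (auto simp del: upt_Suc simp: successively_append_iff successively_Cons last_upt f_def)
    qed
    moreover have "f (hd ?xs) = u" using pu fp by (simp del: upt_Suc add: hd_append)
    moreover have "f (last ?xs) = v" using that pv fp by (simp del: upt_Suc add: last_upt)
    moreover have "length ?xs \<le> n" using that \<open>\<not> j \<le> i + 2\<close> by simp
    ultimately show False using short[of f ?xs] by simp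
  qed
  have kqt: "adjacent A (hd ps) (last ps)" if "is_path V A ps" "length ps = n - 1" for ps
    using assms(5) that unfolding k_quasi_transitive_def n_def by simp
  interpret qt V A p n
    using n7 nodd pV pinj dig(3) step chord samepar F5 kqt by unfold_locales auto
  define I where "I = {x \<in> V - set P. dom_to A {x} (set P)}"
  define W where "W = {x \<in> V - set P. dom_to A (set P) {x}}"
  have "V - (set P \<union> I \<union> W) = {z. inB z}"
  proof -
    have "z \<in> V - (set P \<union> I \<union> W) \<longleftrightarrow> inB z" for z
      unfolding I_def W_def inB_def dom_to_def setP by auto
    then show ?thesis by auto
  qed
  then show ?thesis using final unfolding Let_def I_def W_def by simp
qed

end
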